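(* Let $n\ge2$ be even, and let $K=\langle A,B,T\rangle$ be a Kleinian group obtained as in case (a). Then the subgroup $$\Gamma=\langle A^{j}TA^{-j}: j=0,1,\dots,n-1\rangle$$ is a Schottky group of rank $n$ and has index $2n$ in $K$. It is not a normal subgroup of $K$.
   Context: Case (a): $A(z)=e^{2\pi i/n}z$ and $B(z)=1/z$ generate the dihedral group $D_n$ of order $2n$. $T$ is a loxodromic Möbius transformation with $TBT^{-1}=AB$. $K=\langle A,B,T\rangle$ is obtained as an HNN-extension of $D_n$ by $\langle T\rangle$ via the Klein–Maskit combination theorem. This means there exist closed discs $D_1,D_2\subset\widehat{\mathbb C}$ with boundary loops $\delta_1,\delta_2$ such that: - $h(D_1)\cap D_2=\emptyset$ for all $h\in D_n$; - $D_1$ is precisely invariant under $\langle B\rangle$ in $D_n$, i.e. $h(D_1)=D_1$ for $h\in\langle B\rangle$ and $h(D_1)\cap D_1=\emptyset$ for all other $h\in D_n$; - $D_2$ is precisely invariant under $\langle AB\rangle$ in $D_n$, defined in the same way; - $T(\delta_1)=\delta_2$ and $T$ maps the exterior of $D_1$ onto the interior of $D_2$. A Schottky group of rank $g$ is a Kleinian group generated by loxodromic transformations $A_1,\dots,A_g$ for which there exist $2g$ pairwise disjoint simple loops $\alpha_1,\alpha_1',\dots,\alpha_g,\alpha_g'$ with a common exterior domain $D$ such that $A_i(\alpha_i)=\alpha_i'$ and $A_i(D)\cap D=\emptyset$ for each $i$. *)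

theory Defs
  imports "HOL-Analysis.Analysis" "HOL-Algebra.Coset"
begin

text \<open>The Riemann sphere is modelled as complex option, None being the point at infinity,
with the topology of the one-point compactification of the complex plane.\<close>

type_synonym cpt = "complex option"

definition riemann_sphere :: "cpt topology" where
  "riemann_sphere = topology (\<lambda>U. open (Some -` U) \<and>
      (None \<in> U \<longrightarrow> compact (UNIV - Some -` U)))"

definition moeb :: "complex \<Rightarrow> complex \<Rightarrow> complex \<Rightarrow> complex \<Rightarrow> cpt \<Rightarrow> cpt" where
  "moeb a b c d z = (case z of
      None \<Rightarrow> (if c = 0 then None else Some (a / c))
    | Some w \<Rightarrow> (if c * w + d = 0 then None else Some ((a * w + b) / (c * w + d))))"

definition is_moebius :: "(cpt \<Rightarrow> cpt) \<Rightarrow> bool" where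
  "is_moebius f \<longleftrightarrow> (\<exists>a b c d. a * d - b * c \<noteq> 0 \<and> f = moeb a b c d)"

definition loxodromic :: "(cpt \<Rightarrow> cpt) \<Rightarrow> bool" where
  "loxodromic f \<longleftrightarrow> (\<exists>a b c d. a * d - b * c = 1 \<and> f = moeb a b c d \<and>
       (a + d)\<^sup>2 \<notin> complex_of_real ` {0..4})"

inductive_set mgen :: "(cpt \<Rightarrow> cpt) set \<Rightarrow> (cpt \<Rightarrow> cpt) set" for S where
  mgen_id: "id \<in> mgen S"
| mgen_gen: "f \<in> S \<Longrightarrow> f \<in> mgen S"
| mgen_inv: "f \<in> S \<Longrightarrow> inv_into UNIV f \<in> mgen S"
| mgen_comp: "f \<in> mgen S \<Longrightarrow> g \<in> mgen S \<Longrightarrow> f \<circ> g \<in> mgen S"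

text \<open>Kleinian group: a discrete group of Moebius transformations (identity isolated in PSL(2,C)).\<close>
definition kleinian :: "(cpt \<Rightarrow> cpt) set \<Rightarrow> bool" where
  "kleinian G \<longleftrightarrow> (\<forall>g\<in>G. is_moebius g) \<and> id \<in> G \<and>
     (\<forall>f\<in>G. \<forall>g\<in>G. f \<circ> g \<in> G \<and> inv_into UNIV f \<in> G) \<and>
     (\<exists>\<epsilon>>0. \<forall>g\<in>G. g \<noteq> id \<longrightarrow>
        (\<forall>a b c d. a * d - b * c = 1 \<and> g = moeb a b c d \<longrightarrow>
           \<epsilon> \<le> cmod (a - 1) + cmod b + cmod c + cmod (d - 1)))"

definition closed_disc :: "cpt set \<Rightarrow> bool" where
  "closed_disc D \<longleftrightarrow> (subtopology riemann_sphere D) homeomorphic_space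
                        (top_of_set (cball (0::complex) 1))"

definition simple_loop :: "cpt set \<Rightarrow> bool" where
  "simple_loop L \<longleftrightarrow> (subtopology riemann_sphere L) homeomorphic_space
                        (top_of_set (sphere (0::complex) 1))"

definition schottky :: "(cpt \<Rightarrow> cpt) set \<Rightarrow> nat \<Rightarrow> bool" where
  "schottky G g \<longleftrightarrow> kleinian G \<and>
    (\<exists>gen :: nat \<Rightarrow> cpt \<Rightarrow> cpt. \<exists>al al' E E' :: nat \<Rightarrow> cpt set. \<exists>D.
       G = mgen (gen ` {..<g}) \<and>
       (\<forall>i<g. loxodromic (gen i)) \<and>
       (\<forall>i<g. simple_loop (al i) \<and> simple_loop (al' i)) \<and>
       (\<forall>i<g. closed_disc (E i) \<and> closed_disc (E' i) \<and>
              riemann_sphere frontier_of (E i) = al i \<and>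
              riemann_sphere frontier_of (E' i) = al' i) \<and>
       (\<forall>i<g. \<forall>j<g. E i \<inter> E' j = {}) \<and>
       (\<forall>i<g. \<forall>j<g. i \<noteq> j \<longrightarrow> E i \<inter> E j = {} \<and> E' i \<inter> E' j = {}) \<and>
       D = UNIV - (\<Union>i<g. E i \<union> E' i) \<and>
       (\<forall>i<g. gen i ` (al i) = al' i \<and> gen i ` D \<inter> D = {}))"

definition moeb_group :: "(cpt \<Rightarrow> cpt) set \<Rightarrow> (cpt \<Rightarrow> cpt) monoid" where
  "moeb_group G = \<lparr>carrier = G, monoid.mult = (\<circ>), one = id\<rparr>"

definition precisely_invariant :: "cpt set \<Rightarrow> (cpt \<Rightarrow> cpt) set \<Rightarrow> (cpt \<Rightarrow> cpt) set \<Rightarrow> bool" where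
  "precisely_invariant D H G \<longleftrightarrow> (\<forall>h\<in>H. h ` D = D) \<and> (\<forall>h\<in>G - H. h ` D \<inter> D = {})"

end

theory Submission
  imports Defs "HOL-Homology.Invariance_of_Domain"
begin



definition sc :: "complex \<Rightarrow> cpt \<Rightarrow> cpt" where "sc s = moeb s 0 0 1"

lemma sc_Some[simp]: "sc s (Some w) = Some (s * w)"
  by (simp add: sc_def moeb_def)
lemma sc_None[simp]: "sc s None = None"
  by (simp add: sc_def moeb_def)

lemma sc_comp: "sc s \<circ> sc t = sc (s * t)"
  by (rule ext) (case_tac x, auto)
lemma sc_one: "sc 1 = id"
  by (rule ext) (case_tac x, auto)
lemma sc_inv: "s \<noteq> 0 \<Longrightarrow> sc s \<circ> sc (1/s) = id"
  by (simp add: sc_comp sc_one)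
lemma sc_inv': "s \<noteq> 0 \<Longrightarrow> sc (1/s) \<circ> sc s = id"
  by (simp add: sc_comp sc_one)
lemma bij_sc: "s \<noteq> 0 \<Longrightarrow> bij (sc s)"
  by (rule o_bij[OF sc_inv' sc_inv])
lemma inv_sc: "s \<noteq> 0 \<Longrightarrow> inv_into UNIV (sc s) = sc (1/s)"
  by (rule inv_unique_comp[OF sc_inv sc_inv'])

lemma B_Some: "moeb 0 1 1 0 (Some w) = (if w = 0 then None else Some (1/w))"
  by (simp add: moeb_def)
lemma B_None: "moeb 0 1 1 0 None = Some 0"
  by (simp add: moeb_def)
lemma BB: "moeb 0 1 1 0 \<circ> moeb 0 1 1 0 = id"
  by (rule ext) (case_tac x, auto simp: B_Some B_None)
lemma B_sc: "s \<noteq> 0 \<Longrightarrow> moeb 0 1 1 0 \<circ> sc s = sc (1/s) \<circ> moeb 0 1 1 0"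
  by (rule ext) (case_tac x, auto simp: B_Some B_None)

lemma moeb_inv: fixes a b c d :: complex assumes det: "a * d - b * c = 1"
  shows "moeb d (-b) (-c) a \<circ> moeb a b c d = id"
proof (rule ext)
  fix z
  show "(moeb d (-b) (-c) a \<circ> moeb a b c d) z = id z"
  proof (cases z)
    case None then show ?thesis
    proof (cases "c = 0")
      case True then show ?thesis using None by (simp add: moeb_def)
    next
      case False
      have "- c * (a / c) + a = 0" using False by (simp add: field_simps)
      then show ?thesis using None False by (simp add: moeb_def)
    qed
  next
    case (Some w) then show ?thesis
    proof (cases "c * w + d = 0")
      case True
      then have c0: "c \<noteq> 0" using det by auto
      have "d / - c = w" using True c0 by (simp add: field_simps) (metis add.commute add_diff_cancel diff_0 minus_mult_left)
      then show ?thesis using Some True c0 by (simp add: moeb_def)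
    next
      case False
      define y where "y = (a * w + b) / (c * w + d)"
      have e1: "- c * y + a = 1 / (c * w + d)" unfolding y_def using False det
        by (simp add: field_simps)
      have n2: "d*(a*w+b) - b*(c*w+d) = (a * d - b * c)*w" by (simp add: algebra_simps)
      have e2: "d * y + - b = (d*(a*w+b) - b*(c*w+d)) / (c * w + d)" unfolding y_def using False
        by (simp add: field_simps)
      hence e2: "d * y + - b = w / (c * w + d)" using n2 det by simp
      have "(d * y + - b) / (- c * y + a) = w" using e1 e2 False by simp
      then show ?thesis using Some False e1 by (simp add: moeb_def y_def[symmetric])
    qed
  qed
qed

lemma istop_rs: "istopology (\<lambda>U::cpt set. open (Some -` U) \<and> (None \<in> U \<longrightarrow> compact (UNIV - Some -` U)))"
  unfolding istopology_def
proof (rule conjI; intro allI impI)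
  fix S T :: "cpt set"
  assume S: "open (Some -` S) \<and> (None \<in> S \<longrightarrow> compact (UNIV - Some -` S))"
    and T: "open (Some -` T) \<and> (None \<in> T \<longrightarrow> compact (UNIV - Some -` T))"
  have e: "UNIV - Some -` (S \<inter> T) = (UNIV - Some -` S) \<union> (UNIV - Some -` T)" by auto
  show "open (Some -` (S \<inter> T)) \<and> (None \<in> S \<inter> T \<longrightarrow> compact (UNIV - Some -` (S \<inter> T)))"
  proof -
    have a: "open (Some -` (S \<inter> T))" using S T by (simp add: vimage_Int open_Int)
    have b: "compact (UNIV - Some -` (S \<inter> T))" if "None \<in> S \<inter> T"
      using S T that unfolding e by (intro compact_Un) auto
    show ?thesis using a b by blast
  qed
next
  fix KK :: "cpt set set"
  assume K: "\<forall>K\<in>KK. open (Some -` K) \<and> (None \<in> K \<longrightarrow> compact (UNIV - Some -` K))"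
  have o: "open (Some -` \<Union>KK)" using K by (auto simp: vimage_Union)
  moreover have "compact (UNIV - Some -` \<Union>KK)" if NK: "None \<in> \<Union>KK"
  proof -
    obtain S where S: "S \<in> KK" "None \<in> S" using NK by auto
    have "UNIV - Some -` \<Union>KK = (UNIV - Some -` \<Union>KK) \<inter> (UNIV - Some -` S)" using S by auto
    moreover have "closed (UNIV - Some -` \<Union>KK)" using o by (simp add: closed_def)
    ultimately show ?thesis using K S by (metis closed_Int_compact)
  qed
  ultimately show "open (Some -` \<Union>KK) \<and> (None \<in> \<Union>KK \<longrightarrow> compact (UNIV - Some -` \<Union>KK))" by blast
qed

lemma openin_rs: "openin riemann_sphere U \<longleftrightarrow> open (Some -` U) \<and> (None \<in> U \<longrightarrow> compact (UNIV - Some -` U))"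
  unfolding riemann_sphere_def using istop_rs by simp

lemma topspace_rs[simp]: "topspace riemann_sphere = UNIV"
proof -
  have "openin riemann_sphere UNIV" by (simp add: openin_rs)
  then show ?thesis using openin_subset by blast
qed

lemma openin_rs_Some: "open V \<Longrightarrow> openin riemann_sphere (Some ` V)"
  by (simp add: openin_rs vimage_image_eq inj_on_def)

lemma cont_sc: assumes u: "u \<noteq> 0" shows "continuous_map riemann_sphere riemann_sphere (sc u)"
  unfolding continuous_map
proof (intro conjI allI impI)
  fix U :: "cpt set" assume U: "openin riemann_sphere U"
  have e1: "Some -` {x \<in> topspace riemann_sphere. sc u x \<in> U} = (\<lambda>z. u * z) -` (Some -` U)" by auto
  have e2: "UNIV - (\<lambda>z. u * z) -` (Some -` U) = (\<lambda>z. z / u) ` (UNIV - Some -` U)" (is "?L = ?R")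
  proof
    show "?L \<subseteq> ?R" proof
    fix z assume "z \<in> UNIV - (\<lambda>z. u * z) -` (Some -` U)"
    then have "u * z \<in> UNIV - Some -` U" by auto
    moreover have "z = (u * z) / u" using u by simp
    ultimately show "z \<in> (\<lambda>z. z / u) ` (UNIV - Some -` U)" by blast
  qed
  next
    show "?R \<subseteq> ?L" proof
    fix z assume "z \<in> (\<lambda>z. z / u) ` (UNIV - Some -` U)"
    then obtain y where "y \<notin> Some -` U" "z = y / u" by auto
    then show "z \<in> UNIV - (\<lambda>z. u * z) -` (Some -` U)" using u by auto
  qed
  qed
  have "open ((\<lambda>z. u * z) -` (Some -` U))"
    using U by (intro continuous_open_vimage) (auto simp: openin_rs intro: continuous_intros)
  moreover have "compact ((\<lambda>z. z / u) ` (UNIV - Some -` U))" if "None \<in> U"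
  proof -
    have cu: "continuous_on X (\<lambda>z::complex. z / u)" for X
      by (simp add: divide_inverse continuous_on_mult_right continuous_on_id)
    show ?thesis using U that by (intro compact_continuous_image cu) (auto simp: openin_rs)
  qed
  ultimately show "openin riemann_sphere {x \<in> topspace riemann_sphere. sc u x \<in> U}"
    unfolding openin_rs e1 e2 by auto
qed auto

lemma homeo_sc: assumes u: "u \<noteq> 0" shows "homeomorphic_map riemann_sphere riemann_sphere (sc u)"
proof -
  have "homeomorphic_maps riemann_sphere riemann_sphere (sc u) (sc (1/u))"
    unfolding homeomorphic_maps_def using u cont_sc[of u] cont_sc[of "1/u"]
    by (auto simp: pointfree_idE sc_inv sc_inv')
  then show ?thesis by (rule homeomorphic_maps_imp_map)
qed

lemma frontier_sc: "u \<noteq> 0 \<Longrightarrow> riemann_sphere frontier_of (sc u ` S) = sc u ` (riemann_sphere frontier_of S)"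
  by (rule homeomorphic_map_frontier_of[OF homeo_sc]) auto

lemma closed_disc_sc: assumes u: "u \<noteq> 0" and D: "closed_disc D" shows "closed_disc (sc u ` D)"
proof -
  have "homeomorphic_map (subtopology riemann_sphere D) (subtopology riemann_sphere (sc u ` D)) (sc u)"
    by (rule homeomorphic_map_subtopologies[OF homeo_sc[OF u]]) auto
  then have "subtopology riemann_sphere (sc u ` D) homeomorphic_space subtopology riemann_sphere D"
    using homeomorphic_map_imp_homeomorphic_space homeomorphic_space_sym by blast
  then show ?thesis using D unfolding closed_disc_def using homeomorphic_space_trans by blast
qed

lemma homeo_Some: "homeomorphic_map euclidean (subtopology riemann_sphere (range Some)) Some"
proof -
  have c1: "continuous_map euclidean (subtopology riemann_sphere (range Some)) Some"
  proof (rule continuous_map_into_subtopology)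
    show "continuous_map euclidean riemann_sphere Some"
      unfolding continuous_map by (auto simp: openin_rs vimage_def)
  qed auto
  have c2: "continuous_map (subtopology riemann_sphere (range Some)) euclidean the"
    unfolding continuous_map
  proof (intro conjI allI impI)
    fix V :: "complex set" assume "openin euclidean V"
    then have V: "open V" by simp
    have "{x \<in> topspace (subtopology riemann_sphere (range Some)). the x \<in> V} = Some ` V \<inter> range Some"
      by auto
    then show "openin (subtopology riemann_sphere (range Some)) {x \<in> topspace (subtopology riemann_sphere (range Some)). the x \<in> V}"
      using openin_rs_Some[OF V] by (auto simp: openin_subtopology)
  qed auto
  have "homeomorphic_maps euclidean (subtopology riemann_sphere (range Some)) Some the"
    unfolding homeomorphic_maps_def using c1 c2 by auto
  then show ?thesis by (rule homeomorphic_maps_imp_map)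
qed

lemma homeo_Some_C: "top_of_set C homeomorphic_space subtopology riemann_sphere (Some ` C)"
proof -
  have "homeomorphic_map (subtopology euclidean C) (subtopology (subtopology riemann_sphere (range Some)) (Some ` C)) Some"
    by (rule homeomorphic_map_subtopologies[OF homeo_Some]) auto
  moreover have "subtopology (subtopology riemann_sphere (range Some)) (Some ` C) = subtopology riemann_sphere (Some ` C)"
    by (simp add: subtopology_subtopology Int_absorb1 image_mono)
  ultimately show ?thesis using homeomorphic_map_imp_homeomorphic_space by metis
qed

lemma frontier_Some: assumes C: "compact C"
  shows "riemann_sphere frontier_of (Some ` C) = Some ` frontier C"
proof -
  have cl: "closed C" using C by (rule compact_imp_closed)
  have "closedin riemann_sphere (Some ` C)"
  proof -
    have e: "Some -` (UNIV - Some ` C) = - C" by auto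
    have e2: "UNIV - (- C) = C" by auto
    show ?thesis unfolding closedin_def using cl C
      by (auto simp: openin_rs e e2 open_Compl)
  qed
  then have clo: "riemann_sphere closure_of (Some ` C) = Some ` C" by (simp add: closure_of_eq)
  have int: "riemann_sphere interior_of (Some ` C) = Some ` interior C" (is "?L = ?R")
  proof
    show "?L \<subseteq> ?R" proof
    fix x assume "x \<in> riemann_sphere interior_of (Some ` C)"
    then obtain T where T: "openin riemann_sphere T" "x \<in> T" "T \<subseteq> Some ` C"
      by (auto simp: interior_of_def)
    then obtain z where z: "x = Some z" "z \<in> C" by auto
    have "open (Some -` T)" using T by (simp add: openin_rs)
    moreover have "z \<in> Some -` T" using T z by auto
    moreover have "Some -` T \<subseteq> C" using T by auto
    ultimately have "z \<in> interior C" using interior_maximal[of "Some -` T" C] by blast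
    then show "x \<in> Some ` interior C" using z by auto
  qed
  next
    show "?R \<subseteq> ?L" proof
    fix x assume x: "x \<in> Some ` interior C"
    have "openin riemann_sphere (Some ` interior C)" by (rule openin_rs_Some) simp
    moreover have "Some ` interior C \<subseteq> Some ` C" using interior_subset by (rule image_mono)
    ultimately show "x \<in> riemann_sphere interior_of (Some ` C)"
      unfolding interior_of_def using x by blast
  qed
  qed
  have "Some ` C - Some ` interior C = Some ` (C - interior C)" by (simp add: image_set_diff)
  then show ?thesis unfolding frontier_of_def clo int frontier_def closure_closed[OF cl] .
qed

lemma simple_loop_frontier: assumes D: "closed_disc D" and N: "None \<notin> D"
  shows "simple_loop (riemann_sphere frontier_of D)"
proof -
  define C where "C = Some -` D"
  have DC: "D = Some ` C"
  proof
    show "D \<subseteq> Some ` C" unfolding C_def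
    proof
      fix x assume "x \<in> D"
      then obtain z where "x = Some z" using N by (cases x) auto
      then show "x \<in> Some ` (Some -` D)" using \<open>x \<in> D\<close> by auto
    qed
  qed (auto simp: C_def)
  have "top_of_set C homeomorphic_space top_of_set (cball (0::complex) 1)"
    using homeomorphic_space_trans[OF homeo_Some_C[of C]] D unfolding closed_disc_def DC by blast
  then have h: "C homeomorphic cball (0::complex) 1" by simp
  then have cC: "compact C" by (simp add: homeomorphic_compactness[OF h])
  have "frontier C homeomorphic frontier (cball (0::complex) 1)"
    by (rule homeomorphic_frontiers_same_dimension[OF h]) (auto simp: compact_imp_closed cC)
  then have "top_of_set (frontier C) homeomorphic_space top_of_set (sphere (0::complex) 1)" by simp
  then show ?thesis unfolding simple_loop_def DC frontier_Some[OF cC]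
    by (rule homeomorphic_space_trans[OF homeomorphic_space_sym[THEN iffD1, OF homeo_Some_C]])
qed




lemma sc_1: "sc 1 x = x"
  by (cases x) auto
lemma sc_sc: "sc u (sc v x) = sc (u * v) x"
  by (cases x) auto
lemma sc_eqI: "u = v \<Longrightarrow> sc u x = sc v x" by simp

locale ctx =
  fixes n :: nat and A B T :: "cpt \<Rightarrow> cpt" and D1 D2 :: "cpt set"
  assumes n2: "n \<ge> 2" and n_even: "even n"
    and A_def: "A = moeb (exp (2 * pi * \<i> / of_nat n)) 0 0 1"
    and B_def: "B = moeb 0 1 1 0"
    and T_lox: "loxodromic T"
    and T_conj: "T \<circ> B \<circ> inv_into UNIV T = A \<circ> B"
    and D1_disc: "closed_disc D1" and D2_disc: "closed_disc D2"
    and sep: "\<forall>h\<in>mgen {A, B}. h ` D1 \<inter> D2 = {}"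
    and pi1: "precisely_invariant D1 (mgen {B}) (mgen {A, B})"
    and pi2: "precisely_invariant D2 (mgen {A \<circ> B}) (mgen {A, B})"
    and T_bdry: "T ` (riemann_sphere frontier_of D1) = riemann_sphere frontier_of D2"
    and T_ext: "T ` (UNIV - D1) = riemann_sphere interior_of D2"
    and K_kleinian: "kleinian (mgen {A, B, T})"
begin

definition w :: complex where "w = exp (2 * pi * \<i> / of_nat n)"
definition U :: "complex set" where "U = {z. z ^ n = 1}"

lemma n1: "n \<ge> 1" using n2 by simp

lemma A_sc: "A = sc w" by (simp add: A_def w_def sc_def)

lemma w_pow: "w ^ j = exp (2 * of_real pi * \<i> * of_nat j / of_nat n)"
proof -
  have "w ^ j = exp (of_nat j * (2 * pi * \<i> / of_nat n))"
    by (simp add: w_def exp_of_nat_mult[symmetric])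
  also have "of_nat j * (2 * pi * \<i> / of_nat n) = 2 * of_real pi * \<i> * of_nat j / of_nat n"
    by (simp add: field_simps)
  finally show ?thesis .
qed

lemma w_pow_eq1: "w ^ j = 1 \<longleftrightarrow> n dvd j"
  using complex_root_unity_eq_1[OF n1, of j] by (simp add: w_pow)

lemma w_ne0: "w \<noteq> 0" by (simp add: w_def)
lemma w_n: "w ^ n = 1" by (simp add: w_pow_eq1)
lemma w_ne1: "w \<noteq> 1"
  using w_pow_eq1[of 1] n2 by auto

lemma U_eq: "U = {w ^ j | j. j < n}"
  unfolding U_def complex_roots_unity[OF n1] w_pow ..

lemma card_U: "card U = n"
  unfolding U_def by (rule card_complex_roots_unity[OF n1])

lemma w_pow_inj: "i < n \<Longrightarrow> j < n \<Longrightarrow> w ^ i = w ^ j \<Longrightarrow> i = j"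
  using complex_root_unity_eq[OF n1, of i j] by (simp add: w_pow)

lemma U_ne0: "u \<in> U \<Longrightarrow> u \<noteq> 0"
  unfolding U_def using n1 by (auto simp: power_0_left)
lemma U_mult: "u \<in> U \<Longrightarrow> v \<in> U \<Longrightarrow> u * v \<in> U"
  by (simp add: U_def power_mult_distrib)
lemma U_div: "u \<in> U \<Longrightarrow> v \<in> U \<Longrightarrow> u / v \<in> U"
  by (simp add: U_def power_divide)
lemma U_w: "w \<in> U" by (simp add: U_def w_n)
lemma U_1: "1 \<in> U" by (simp add: U_def)
lemma U_wpow: "w ^ j \<in> U" by (simp add: U_def w_n flip: power_mult power_mult_distrib) (metis power_mult power_one w_n mult.commute)
lemma finite_U: "finite U" using card_U n1 card.infinite by fastforce

lemma A_pow: "A ^^ j = sc (w ^ j)"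
  by (induction j) (simp_all add: sc_one A_sc sc_comp)

lemma inv_A_pow: "inv_into UNIV (A ^^ j) = sc (1 / w ^ j)"
  by (simp add: A_pow inv_sc w_ne0)

lemma T_bij_facts: "bij T \<and> T \<circ> inv_into UNIV T = id \<and> inv_into UNIV T \<circ> T = id"
proof -
  obtain a b c d where det: "a * d - b * c = 1" and Td: "T = moeb a b c d"
    using T_lox unfolding loxodromic_def by blast
  have l: "moeb d (-b) (-c) a \<circ> T = id" using moeb_inv[OF det] Td by simp
  have det2: "d * a - (- b) * (- c) = 1" using det by (simp add: algebra_simps)
  have r: "T \<circ> moeb d (-b) (-c) a = id" using moeb_inv[OF det2] Td by simp
  have b: "bij T" by (rule o_bij[OF l r])
  have "inv_into UNIV T = moeb d (-b) (-c) a" by (rule inv_unique_comp[OF r l])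
  then show ?thesis using b l r by simp
qed

definition invT where "invT = inv_into UNIV T"

lemma bij_T: "bij T" using T_bij_facts by simp
lemma T_invT: "T (invT x) = x" using T_bij_facts unfolding invT_def by (metis comp_apply id_apply)
lemma invT_T: "invT (T x) = x" using T_bij_facts unfolding invT_def by (metis comp_apply id_apply)

lemma B_B: "B (B x) = x" using BB B_def by (metis comp_apply id_apply)
lemma B_sc': "u \<noteq> 0 \<Longrightarrow> B (sc u x) = sc (1/u) (B x)"
  using B_sc[of u] B_def by (metis comp_apply)
lemma B_None': "B None = Some 0" by (simp add: B_def B_None)
lemma B_Some0: "B (Some 0) = None" by (simp add: B_def B_Some)

lemma T_B: "T (B x) = sc w (B (T x))"
proof -
  have "(T \<circ> B \<circ> inv_into UNIV T) (T x) = (A \<circ> B) (T x)" using T_conj by simp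
  moreover have "inv_into UNIV T (T x) = x" using invT_T invT_def by simp
  ultimately show ?thesis by (simp add: A_sc)
qed

lemma B_T: "B (T x) = sc (1/w) (T (B x))"
proof -
  have "T x = sc w (B (T (B x)))" using T_B[of "B x"] by (simp add: B_B)
  then have "B (T x) = B (sc w (B (T (B x))))" by simp
  also have "\<dots> = sc (1/w) (T (B x))" by (simp add: B_sc' w_ne0 B_B)
  finally show ?thesis .
qed

lemma B_invT: "B (invT x) = invT (sc w (B x))"
proof -
  have "T (B (invT x)) = sc w (B x)" using T_B[of "invT x"] by (simp add: T_invT)
  then have "invT (T (B (invT x))) = invT (sc w (B x))" by simp
  then show ?thesis by (simp add: invT_T)
qed

definition G where "G u = sc u \<circ> T \<circ> sc (1/u)"
definition Gi where "Gi u = sc u \<circ> invT \<circ> sc (1/u)"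

lemma G_app: "G u x = sc u (T (sc (1/u) x))" by (simp add: G_def)
lemma Gi_app: "Gi u x = sc u (invT (sc (1/u) x))" by (simp add: Gi_def)

lemma G_Gi: "u \<noteq> 0 \<Longrightarrow> G u \<circ> Gi u = id"
  by (rule ext) (simp add: G_app Gi_app sc_sc T_invT sc_1)
lemma Gi_G: "u \<noteq> 0 \<Longrightarrow> Gi u \<circ> G u = id"
  by (rule ext) (simp add: G_app Gi_app sc_sc invT_T sc_1)
lemma inv_G: "u \<noteq> 0 \<Longrightarrow> inv_into UNIV (G u) = Gi u"
  by (rule inv_unique_comp[OF G_Gi Gi_G])
lemma inv_Gi: "u \<noteq> 0 \<Longrightarrow> inv_into UNIV (Gi u) = G u"
  by (rule inv_unique_comp[OF Gi_G G_Gi])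
lemma bij_G: "u \<noteq> 0 \<Longrightarrow> bij (G u)"
  by (rule o_bij[OF Gi_G G_Gi])

lemma gens_eq: "{(A ^^ j) \<circ> T \<circ> inv_into UNIV (A ^^ j) | j. j < n} = {G u | u. u \<in> U}"
proof -
  have e: "(A ^^ j) \<circ> T \<circ> inv_into UNIV (A ^^ j) = G (w ^ j)" for j
    unfolding inv_A_pow unfolding A_pow G_def ..
  show ?thesis unfolding e U_eq by blast
qed

definition Gam where "Gam = mgen {(A ^^ j) \<circ> T \<circ> inv_into UNIV (A ^^ j) | j. j < n}"

lemma Gam_eq: "Gam = mgen {G u | u. u \<in> U}" by (simp add: Gam_def gens_eq)

end



context ctx begin

definition DD where "DD = {sc u | u. u \<in> U} \<union> {sc u \<circ> B | u. u \<in> U}"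

lemma DD_iff: "d \<in> DD \<longleftrightarrow> (\<exists>u\<in>U. d = sc u \<or> d = sc u \<circ> B)"
  unfolding DD_def by blast

lemma DD_closed: assumes "d1 \<in> DD" "d2 \<in> DD" shows "d1 \<circ> d2 \<in> DD"
proof -
  obtain u where u: "u \<in> U" "d1 = sc u \<or> d1 = sc u \<circ> B" using assms(1) DD_iff by blast
  obtain v where v: "v \<in> U" "d2 = sc v \<or> d2 = sc v \<circ> B" using assms(2) DD_iff by blast
  have v0: "v \<noteq> 0" using v U_ne0 by simp
  have uv: "u * v \<in> U" "u / v \<in> U" using u v U_mult U_div by auto
  have e1: "sc u \<circ> sc v = sc (u * v)" by (simp add: sc_comp)
  have e2: "sc u \<circ> (sc v \<circ> B) = sc (u * v) \<circ> B" by (simp add: sc_comp comp_assoc[symmetric])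
  have e3: "(sc u \<circ> B) \<circ> sc v = sc (u / v) \<circ> B"
    by (rule ext) (simp add: B_sc' v0 sc_sc)
  have e4: "(sc u \<circ> B) \<circ> (sc v \<circ> B) = sc (u / v)"
    by (rule ext) (simp add: B_sc' v0 sc_sc B_B)
  show ?thesis using u v uv e1 e2 e3 e4 DD_iff by metis
qed

lemma id_DD: "id \<in> DD" using DD_iff U_1 sc_one by metis
lemma B_DD: "B \<in> DD" using DD_iff U_1 sc_one by (metis id_comp)
lemma A_DD: "A \<in> DD" using DD_iff U_w A_sc by metis

lemma inv_B: "inv_into UNIV B = B"
  using inv_unique_comp[OF BB BB] B_def by simp
lemma B_comp_B: "B \<circ> B = id" using BB B_def by simp

lemma mgenAB_DD: "mgen {A, B} \<subseteq> DD"
proof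
  fix f assume "f \<in> mgen {A, B}"
  then show "f \<in> DD"
  proof (induction rule: mgen.induct)
    case mgen_id then show ?case by (rule id_DD)
  next
    case (mgen_gen f) then show ?case using A_DD B_DD by auto
  next
    case (mgen_inv f)
    then have "f = A \<or> f = B" by auto
    then show ?case
    proof
      assume "f = A"
      then have "inv_into UNIV f = sc (1/w)" using A_sc inv_sc w_ne0 by simp
      then show ?thesis using DD_iff U_div[OF U_1 U_w] by auto
    next
      assume "f = B" then show ?thesis using inv_B B_DD by simp
    qed
  next
    case (mgen_comp f g) then show ?case using DD_closed by blast
  qed
qed

lemma A_pow_mgen: "A ^^ j \<in> mgen {A, B}"
proof (induction j)
  case 0 then show ?case using mgen_id[of "{A, B}", unfolded id_def] by simp
next
  case (Suc j)
  show ?case unfolding funpow.simps(2) by (rule mgen_comp[OF mgen_gen Suc]) simp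
qed

lemma sc_U_mgen: "u \<in> U \<Longrightarrow> sc u \<in> mgen {A, B}"
  using A_pow_mgen A_pow U_eq by auto

lemma DD_mgenAB: "DD \<subseteq> mgen {A, B}"
proof
  fix d assume "d \<in> DD"
  then obtain u where u: "u \<in> U" "d = sc u \<or> d = sc u \<circ> B" using DD_iff by blast
  have "sc u \<in> mgen {A, B}" by (rule sc_U_mgen[OF u(1)])
  moreover have "B \<in> mgen {A, B}" by (rule mgen_gen) simp
  ultimately show "d \<in> mgen {A, B}" using u(2) mgen_comp by metis
qed

lemma mgenB: "mgen {B} \<subseteq> {id, B}"
proof
  fix f assume "f \<in> mgen {B}"
  then show "f \<in> {id, B}"
  proof (induction rule: mgen.induct)
    case (mgen_comp f g) then show ?case using B_comp_B by (auto simp: B_B)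
  qed (auto simp: inv_B)
qed

lemma AB_AB: "(A \<circ> B) \<circ> (A \<circ> B) = id"
  by (rule ext) (simp add: A_sc B_sc' w_ne0 sc_sc B_B sc_1)

lemma AB_AB_pt: "A (B (A (B x))) = x"
  using AB_AB by (metis comp_apply id_apply)

lemma mgenAB': "mgen {A \<circ> B} \<subseteq> {id, A \<circ> B}"
proof
  fix f assume "f \<in> mgen {A \<circ> B}"
  then show "f \<in> {id, A \<circ> B}"
  proof (induction rule: mgen.induct)
    case (mgen_comp f g) then show ?case using AB_AB by (auto simp: AB_AB_pt)
  qed (auto simp: inv_unique_comp[OF AB_AB AB_AB])
qed

lemma sc_ne_id: "u \<noteq> 1 \<Longrightarrow> sc u \<noteq> id"
proof
  assume "u \<noteq> 1" "sc u = id"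
  then have "sc u (Some 1) = Some 1" by simp
  then show False using \<open>u \<noteq> 1\<close> by simp
qed
lemma sc_ne_B: "sc u \<noteq> B"
proof
  assume "sc u = B"
  then have "sc u None = B None" by simp
  then show False by (simp add: B_None')
qed
lemma sc_ne_AB: "sc u \<noteq> A \<circ> B"
proof
  assume "sc u = A \<circ> B"
  then have "sc u None = (A \<circ> B) None" by simp
  then show False by (simp add: B_None' A_sc)
qed

lemma sc_not_B: "u \<in> U \<Longrightarrow> u \<noteq> 1 \<Longrightarrow> sc u \<in> mgen {A, B} - mgen {B}"
  using sc_U_mgen mgenB sc_ne_id sc_ne_B by blast
lemma sc_not_AB: "u \<in> U \<Longrightarrow> u \<noteq> 1 \<Longrightarrow> sc u \<in> mgen {A, B} - mgen {A \<circ> B}"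
  using sc_U_mgen mgenAB' sc_ne_id sc_ne_AB by blast

lemma meet_shift: assumes "u \<noteq> 0" "v \<noteq> 0" "x \<in> sc u ` X" "x \<in> sc v ` Y"
  shows "sc (1/v) x \<in> sc (u/v) ` X \<inter> Y"
proof -
  obtain a where a: "a \<in> X" "x = sc u a" using assms by auto
  obtain b where b: "b \<in> Y" "x = sc v b" using assms by auto
  have "sc (1/v) x = sc (u/v) a" using a by (simp add: sc_sc)
  moreover have "sc (1/v) x = b" using b assms by (simp add: sc_sc sc_1)
  ultimately show ?thesis using a b by (metis IntI image_eqI)
qed

lemma dj12: assumes "u \<in> U" "v \<in> U" shows "sc u ` D1 \<inter> sc v ` D2 = {}"
proof (rule ccontr)
  assume "sc u ` D1 \<inter> sc v ` D2 \<noteq> {}"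
  then obtain x where "x \<in> sc u ` D1" "x \<in> sc v ` D2" by blast
  then have "sc (1/v) x \<in> sc (u/v) ` D1 \<inter> D2" using meet_shift assms U_ne0 by blast
  moreover have "sc (u/v) \<in> mgen {A, B}" using sc_U_mgen U_div assms by blast
  ultimately show False using sep by blast
qed

lemma dj11: assumes "u \<in> U" "v \<in> U" "u \<noteq> v" shows "sc u ` D1 \<inter> sc v ` D1 = {}"
proof (rule ccontr)
  assume "sc u ` D1 \<inter> sc v ` D1 \<noteq> {}"
  then obtain x where "x \<in> sc u ` D1" "x \<in> sc v ` D1" by blast
  then have "sc (1/v) x \<in> sc (u/v) ` D1 \<inter> D1" using meet_shift assms U_ne0 by blast
  moreover have "u / v \<noteq> 1" using assms U_ne0 by auto
  then have "sc (u/v) \<in> mgen {A, B} - mgen {B}" using sc_not_B U_div assms by blast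
  ultimately show False using pi1 unfolding precisely_invariant_def by blast
qed

lemma dj22: assumes "u \<in> U" "v \<in> U" "u \<noteq> v" shows "sc u ` D2 \<inter> sc v ` D2 = {}"
proof (rule ccontr)
  assume "sc u ` D2 \<inter> sc v ` D2 \<noteq> {}"
  then obtain x where "x \<in> sc u ` D2" "x \<in> sc v ` D2" by blast
  then have "sc (1/v) x \<in> sc (u/v) ` D2 \<inter> D2" using meet_shift assms U_ne0 by blast
  moreover have "u / v \<noteq> 1" using assms U_ne0 by auto
  then have "sc (u/v) \<in> mgen {A, B} - mgen {A \<circ> B}" using sc_not_AB U_div assms by blast
  ultimately show False using pi2 unfolding precisely_invariant_def by blast
qed

definition X where "X = {Some 0, None}"

lemma sc_X: "p \<in> X \<Longrightarrow> sc u p = p" by (auto simp: X_def)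

lemma X_D1: "p \<in> X \<Longrightarrow> p \<notin> D1"
proof
  assume p: "p \<in> X" "p \<in> D1"
  have "p \<in> A ` D1 \<inter> D1" using p sc_X[of p w] A_sc by (metis IntI image_eqI)
  moreover have "A \<in> mgen {A, B} - mgen {B}" using sc_not_B[OF U_w w_ne1] A_sc by simp
  ultimately show False using pi1 unfolding precisely_invariant_def by blast
qed

lemma X_D2: "p \<in> X \<Longrightarrow> p \<notin> D2"
proof
  assume p: "p \<in> X" "p \<in> D2"
  have "p \<in> A ` D2 \<inter> D2" using p sc_X[of p w] A_sc by (metis IntI image_eqI)
  moreover have "A \<in> mgen {A, B} - mgen {A \<circ> B}" using sc_not_AB[OF U_w w_ne1] A_sc by simp
  ultimately show False using pi2 unfolding precisely_invariant_def by blast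
qed

lemma X_sc_D: assumes "p \<in> X" "u \<noteq> 0" shows "p \<notin> sc u ` D1" "p \<notin> sc u ` D2"
proof -
  have *: "p \<in> sc u ` S \<Longrightarrow> p \<in> S" for S
  proof -
    assume "p \<in> sc u ` S"
    then obtain a where a: "a \<in> S" "p = sc u a" by auto
    then have "sc (1/u) p = a" using assms by (simp add: sc_sc sc_1)
    then show "p \<in> S" using a sc_X[OF assms(1)] by simp
  qed
  show "p \<notin> sc u ` D1" using * X_D1[OF assms(1)] by blast
  show "p \<notin> sc u ` D2" using * X_D2[OF assms(1)] by blast
qed

lemma DD_X: "d \<in> DD \<Longrightarrow> p \<in> X \<Longrightarrow> d p \<in> X"
  unfolding DD_iff by (auto simp: X_def B_None' B_Some0)

end



fun flip :: "complex \<times> bool \<Rightarrow> complex \<times> bool" where "flip (u, b) = (u, \<not> b)"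

lemma flip_flip: "flip (flip l) = l" by (cases l) auto
lemma fst_flip: "fst (flip l) = fst l" by (cases l) auto

fun red :: "(complex \<times> bool) list \<Rightarrow> bool" where
  "red [] = True"
| "red [l] = True"
| "red (l # l' # ws) = (l \<noteq> flip l' \<and> red (l' # ws))"

lemma red_tl: "red (l # ws) \<Longrightarrow> red ws"
  by (cases ws) auto

definition rc :: "complex \<times> bool \<Rightarrow> (complex \<times> bool) list \<Rightarrow> (complex \<times> bool) list" where
  "rc l ws = (case ws of [] \<Rightarrow> [l] | l' # ws' \<Rightarrow> if l' = flip l then ws' else l # ws)"

lemma rc_red: "red ws \<Longrightarrow> red (rc l ws)"
proof (cases ws)
  case Nil then show ?thesis by (simp add: rc_def)
next
  case (Cons l' ws')
  assume r: "red ws"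
  show ?thesis
  proof (cases "l' = flip l")
    case True then show ?thesis using r Cons red_tl by (simp add: rc_def)
  next
    case False
    then have "l \<noteq> flip l'" using flip_flip by metis
    then show ?thesis using r Cons False by (simp add: rc_def)
  qed
qed

lemma rc_set: "fst ` set (rc l ws) \<subseteq> insert (fst l) (fst ` set ws)"
  by (cases ws) (auto simp: rc_def)

lemma foldr_rc_red: "red ws2 \<Longrightarrow> red (foldr rc ws1 ws2)"
  by (induction ws1) (auto intro: rc_red)

lemma foldr_rc_set: "fst ` set (foldr rc ws1 ws2) \<subseteq> fst ` set ws1 \<union> fst ` set ws2"
proof (induction ws1)
  case Nil then show ?case by simp
next
  case (Cons l ws1)
  have "fst ` set (rc l (foldr rc ws1 ws2)) \<subseteq> insert (fst l) (fst ` set ws1 \<union> fst ` set ws2)"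
    using Cons.IH rc_set[of l "foldr rc ws1 ws2"] by blast
  then show ?case by (simp add: image_Un)
qed

context ctx begin

definition ev where "ev l = (if snd l then G (fst l) else Gi (fst l))"
definition src where "src l = (if snd l then sc (fst l) ` D1 else sc (fst l) ` D2)"
definition tgt where "tgt l = (if snd l then sc (fst l) ` D2 else sc (fst l) ` D1)"
definition evw where "evw ws = foldr (\<lambda>l f. ev l \<circ> f) ws id"

lemma evw_Nil[simp]: "evw [] = id" by (simp add: evw_def)
lemma evw_Cons[simp]: "evw (l # ws) = ev l \<circ> evw ws" by (simp add: evw_def)

lemma ev_flip: "fst l \<noteq> 0 \<Longrightarrow> ev l \<circ> ev (flip l) = id"
  by (cases l) (auto simp: ev_def G_Gi Gi_G)

lemma interior_D2: "riemann_sphere interior_of D2 \<subseteq> D2"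
  by (rule interior_of_subset)

lemma letter: assumes "fst l \<in> U" "x \<notin> src l" shows "ev l x \<in> tgt l"
proof -
  obtain u b where l: "l = (u, b)" by (cases l)
  have u0: "u \<noteq> 0" using assms l U_ne0 by simp
  define y where "y = sc (1/u) x"
  have xy: "x = sc u y" using u0 by (simp add: y_def sc_sc sc_1)
  show ?thesis
  proof (cases b)
    case True
    then have "y \<notin> D1" using assms l xy by (auto simp: src_def)
    then have "T y \<in> D2" using T_ext interior_D2 by blast
    then show ?thesis using l True by (simp add: ev_def tgt_def G_app y_def[symmetric])
  next
    case False
    then have "y \<notin> D2" using assms l xy by (auto simp: src_def)
    have "invT y \<in> D1"
    proof (rule ccontr)
      assume "invT y \<notin> D1"
      then have "T (invT y) \<in> D2" using T_ext interior_D2 by blast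
      then show False using \<open>y \<notin> D2\<close> by (simp add: T_invT)
    qed
    then show ?thesis using l False by (simp add: ev_def tgt_def Gi_app y_def[symmetric])
  qed
qed

lemma disj_letters: assumes "fst l \<in> U" "fst l' \<in> U" "l \<noteq> flip l'"
  shows "tgt l' \<inter> src l = {}"
proof -
  obtain u b where l: "l = (u, b)" by (cases l)
  obtain v c where l': "l' = (v, c)" by (cases l')
  have uv: "u \<in> U" "v \<in> U" using assms l l' by auto
  show ?thesis
  proof (cases b; cases c)
    assume "b" "c" then show ?thesis using l l' dj12[OF uv] by (auto simp: tgt_def src_def)
  next
    assume "b" "\<not> c"
    then have "u \<noteq> v" using assms l l' by auto
    then show ?thesis using \<open>b\<close> \<open>\<not> c\<close> l l' dj11[OF uv(2) uv(1)] by (auto simp: tgt_def src_def)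
  next
    assume "\<not> b" "c"
    then have "u \<noteq> v" using assms l l' by auto
    then show ?thesis using \<open>\<not> b\<close> \<open>c\<close> l l' dj22[OF uv(2) uv(1)] by (auto simp: tgt_def src_def)
  next
    assume "\<not> b" "\<not> c" then show ?thesis using l l' dj12[OF uv(2) uv(1)] by (auto simp: tgt_def src_def)
  qed
qed

lemma pingpong: "red ws \<Longrightarrow> ws \<noteq> [] \<Longrightarrow> fst ` set ws \<subseteq> U \<Longrightarrow> x \<notin> src (last ws) \<Longrightarrow> evw ws x \<in> tgt (hd ws)"
proof (induction ws rule: red.induct)
  case 1 then show ?case by simp
next
  case (2 l) then show ?case using letter by simp
next
  case (3 l l' ws)
  have IH: "evw (l' # ws) x \<in> tgt l'" using 3 by simp
  have "tgt l' \<inter> src l = {}" using 3 disj_letters by simp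
  then have "evw (l' # ws) x \<notin> src l" using IH by blast
  then have "ev l (evw (l' # ws) x) \<in> tgt l" using letter 3 by simp
  then show ?case by simp
qed

lemma rc_ev: "fst l \<in> U \<Longrightarrow> evw (rc l ws) = ev l \<circ> evw ws"
proof (cases ws)
  case Nil then show ?thesis by (simp add: rc_def)
next
  case (Cons l' ws')
  assume u: "fst l \<in> U"
  show ?thesis
  proof (cases "l' = flip l")
    case True
    have "ev l \<circ> evw ws = (ev l \<circ> ev (flip l)) \<circ> evw ws'" using Cons True by (simp add: comp_assoc)
    also have "\<dots> = evw ws'" using ev_flip u U_ne0 by simp
    finally show ?thesis using Cons True by (simp add: rc_def)
  next
    case False then show ?thesis using Cons by (simp add: rc_def)
  qed
qed

lemma foldr_rc_ev: "fst ` set ws1 \<subseteq> U \<Longrightarrow> evw (foldr rc ws1 ws2) = evw ws1 \<circ> evw ws2"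
proof (induction ws1)
  case Nil then show ?case by simp
next
  case (Cons l ws1)
  then show ?case by (simp add: rc_ev comp_assoc)
qed

lemma Gam_words: assumes "f \<in> Gam" shows "\<exists>ws. red ws \<and> fst ` set ws \<subseteq> U \<and> f = evw ws"
  using assms unfolding Gam_eq
proof (induction rule: mgen.induct)
  case mgen_id then show ?case by (intro exI[of _ "[]"]) simp
next
  case (mgen_gen f)
  then obtain u where u: "u \<in> U" "f = G u" by blast
  then show ?case by (intro exI[of _ "[(u, True)]"]) (simp add: ev_def)
next
  case (mgen_inv f)
  then obtain u where u: "u \<in> U" "f = G u" by blast
  then show ?case using inv_G U_ne0 by (intro exI[of _ "[(u, False)]"]) (simp add: ev_def)
next
  case (mgen_comp f g)
  then obtain ws1 ws2 where w: "red ws1" "fst ` set ws1 \<subseteq> U" "f = evw ws1"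
    "red ws2" "fst ` set ws2 \<subseteq> U" "g = evw ws2" by blast
  have s: "fst ` set (foldr rc ws1 ws2) \<subseteq> U" using w(2,5) foldr_rc_set[of ws1 ws2] by blast
  show ?case
    using w foldr_rc_red[of ws2 ws1] s foldr_rc_ev[of ws1 ws2]
    by (intro exI[of _ "foldr rc ws1 ws2"]) simp
qed

lemma PP: assumes "f \<in> Gam" "p \<in> X" "f p \<in> X" shows "f = id"
proof -
  obtain ws where ws: "red ws" "fst ` set ws \<subseteq> U" "f = evw ws" using Gam_words assms by blast
  show ?thesis
  proof (cases "ws = []")
    case True then show ?thesis using ws by simp
  next
    case False
    have l: "fst (last ws) \<in> U" "fst (hd ws) \<in> U" using False ws by auto
    have "p \<notin> src (last ws)" using X_sc_D[OF assms(2)] l U_ne0 by (simp add: src_def)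
    then have "f p \<in> tgt (hd ws)" using pingpong ws False by simp
    moreover have "f p \<notin> tgt (hd ws)" using X_sc_D[OF assms(3)] l U_ne0 by (simp add: tgt_def)
    ultimately show ?thesis by blast
  qed
qed

end



context ctx begin

definition K where "K = mgen {A, B, T}"

lemma K_kl: "kleinian K" using K_kleinian K_def by simp
lemma K_id: "id \<in> K" using K_kl by (simp add: kleinian_def)
lemma K_comp: "f \<in> K \<Longrightarrow> g \<in> K \<Longrightarrow> f \<circ> g \<in> K" using K_kl by (simp add: kleinian_def)
lemma K_inv: "f \<in> K \<Longrightarrow> inv_into UNIV f \<in> K" using K_kl by (simp add: kleinian_def)

lemma bij_B: "bij B" by (rule o_bij[OF B_comp_B B_comp_B])

lemma K_bij: assumes "f \<in> K" shows "bij f"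
  using assms unfolding K_def
proof (induction rule: mgen.induct)
  case mgen_id then show ?case by (rule bij_id)
next
  case (mgen_gen f) then show ?case using bij_B bij_T bij_sc[OF w_ne0] A_sc by auto
next
  case (mgen_inv f)
  then have "bij f" using bij_B bij_T bij_sc[OF w_ne0] A_sc by auto
  then show ?case by (rule bij_imp_bij_inv)
next
  case (mgen_comp f g) then show ?case using bij_comp by blast
qed

lemma AB_K: "mgen {A, B} \<subseteq> K"
proof
  fix f assume "f \<in> mgen {A, B}"
  then show "f \<in> K" unfolding K_def
  proof (induction rule: mgen.induct)
    case mgen_id then show ?case by (rule mgen.mgen_id)
  next
    case (mgen_gen f) then show ?case by (intro mgen.mgen_gen) auto
  next
    case (mgen_inv f) then show ?case by (intro mgen.mgen_inv) auto
  next
    case (mgen_comp f g) show ?case using mgen_comp.IH by (rule mgen.mgen_comp)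
  qed
qed

lemma DD_K: "DD \<subseteq> K" using DD_mgenAB AB_K by blast
lemma T_K: "T \<in> K" unfolding K_def by (rule mgen_gen) simp

lemma G_K: "u \<in> U \<Longrightarrow> G u \<in> K"
proof -
  assume "u \<in> U"
  then obtain j where j: "G u = (A ^^ j) \<circ> T \<circ> inv_into UNIV (A ^^ j)" using gens_eq by blast
  have "A ^^ j \<in> K" using A_pow_mgen AB_K by blast
  then show ?thesis unfolding j using K_comp K_inv T_K by blast
qed

lemma Gam_K: "Gam \<subseteq> K"
proof
  fix f assume "f \<in> Gam"
  then show "f \<in> K" unfolding Gam_eq
  proof (induction rule: mgen.induct)
    case mgen_id then show ?case by (rule K_id)
  next
    case (mgen_gen f) then show ?case using G_K by blast
  next
    case (mgen_inv f) then show ?case using G_K K_inv by blast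
  next
    case (mgen_comp f g) show ?case using mgen_comp.IH by (rule K_comp)
  qed
qed

lemma Gam_id: "id \<in> Gam" unfolding Gam_def by (rule mgen_id)
lemma Gam_comp: "f \<in> Gam \<Longrightarrow> g \<in> Gam \<Longrightarrow> f \<circ> g \<in> Gam" unfolding Gam_def by (rule mgen_comp)
lemma G_Gam: "u \<in> U \<Longrightarrow> G u \<in> Gam" unfolding Gam_eq by (rule mgen_gen) blast
lemma Gi_Gam: "u \<in> U \<Longrightarrow> Gi u \<in> Gam"
proof -
  assume u: "u \<in> U"
  have "inv_into UNIV (G u) \<in> Gam" unfolding Gam_eq by (rule mgen_inv) (use u in blast)
  then show ?thesis using inv_G U_ne0 u by simp
qed

lemma Gam_inv: assumes "f \<in> Gam" shows "inv_into UNIV f \<in> Gam"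
proof -
  have "f \<in> mgen {G u | u. u \<in> U}" using assms Gam_eq by simp
  then show ?thesis
  proof (induction rule: mgen.induct)
    case mgen_id then show ?case using Gam_id[unfolded id_def] by simp
  next
    case (mgen_gen f) then show ?case using Gi_Gam inv_G U_ne0 by auto
  next
    case (mgen_inv f) then show ?case using G_Gam inv_G inv_Gi U_ne0 by auto
  next
    case (mgen_comp f g)
    have "bij f" "bij g" using mgen_comp.hyps Gam_eq Gam_K K_bij by auto
    then have "inv_into UNIV (f \<circ> g) = inv_into UNIV g \<circ> inv_into UNIV f" by (rule o_inv_distrib)
    then show ?case using mgen_comp.IH Gam_comp by metis
  qed
qed

lemma T_Gam: "T \<in> Gam" using G_Gam[OF U_1] by (simp add: G_def sc_one)
lemma invT_Gam: "invT \<in> Gam" using Gi_Gam[OF U_1] by (simp add: Gi_def sc_one)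

abbreviation M where "M \<equiv> moeb_group K"

lemma M_simps[simp]: "carrier M = K" "mult M = (\<circ>)" "one M = id"
  by (simp_all add: moeb_group_def)

lemma grp: "group M"
proof (rule groupI)
  fix x assume x: "x \<in> carrier M"
  have "inv_into UNIV x \<circ> x = id" using K_bij x by (simp add: bij_is_inj inv_o_cancel)
  then show "\<exists>y\<in>carrier M. y \<otimes>\<^bsub>M\<^esub> x = \<one>\<^bsub>M\<^esub>" using K_inv x by auto
qed (auto simp: K_comp K_id comp_assoc)

lemma minv: "x \<in> K \<Longrightarrow> inv\<^bsub>M\<^esub> x = inv_into UNIV x"
  using group.inv_equality[OF grp, of "inv_into UNIV x" x] K_bij K_inv
  by (simp add: bij_is_inj inv_o_cancel)

lemma Gam_sub: "subgroup Gam M"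
  by (rule group.subgroupI[OF grp]) (use Gam_K Gam_id Gam_inv Gam_comp minv in auto)

end



context ctx begin

lemma id_a: "u \<noteq> 0 \<Longrightarrow> v \<noteq> 0 \<Longrightarrow> sc v \<circ> G u = G (v * u) \<circ> sc v"
  by (rule ext) (simp add: G_app sc_sc field_simps)

lemma id_b: "u \<noteq> 0 \<Longrightarrow> v \<noteq> 0 \<Longrightarrow> sc v \<circ> Gi u = Gi (v * u) \<circ> sc v"
  by (rule ext) (simp add: Gi_app sc_sc field_simps)

lemma id_c: "u \<noteq> 0 \<Longrightarrow> v \<noteq> 0 \<Longrightarrow> (sc v \<circ> B) \<circ> G u = G (v / (u * w)) \<circ> (sc (v / w) \<circ> B)"
  using w_ne0 by (intro ext) (simp add: G_app sc_sc B_sc' B_T field_simps)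

lemma id_d: "u \<noteq> 0 \<Longrightarrow> v \<noteq> 0 \<Longrightarrow> (sc v \<circ> B) \<circ> Gi u = Gi (v / u) \<circ> (sc (v * w) \<circ> B)"
  using w_ne0 by (intro ext) (simp add: Gi_app sc_sc B_sc' B_invT field_simps)


lemma DGam: assumes "f \<in> Gam" shows "\<forall>d\<in>DD. \<exists>g\<in>Gam. \<exists>d'\<in>DD. d \<circ> f = g \<circ> d'"
proof -
  have "f \<in> mgen {G u | u. u \<in> U}" using assms Gam_eq by simp
  then show ?thesis
  proof (induction rule: mgen.induct)
    case mgen_id show ?case
    proof
      fix d assume "d \<in> DD"
      moreover have "d \<circ> id = id \<circ> d" by simp
      ultimately show "\<exists>g\<in>Gam. \<exists>d'\<in>DD. d \<circ> id = g \<circ> d'" using Gam_id by blast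
    qed
  next
    case (mgen_gen f)
    then obtain u where u: "u \<in> U" "f = G u" by blast
    show ?case
    proof
      fix d assume "d \<in> DD"
      then obtain v where v: "v \<in> U" "d = sc v \<or> d = sc v \<circ> B" using DD_iff by blast
      have nz: "u \<noteq> 0" "v \<noteq> 0" using u v U_ne0 by auto
      show "\<exists>g\<in>Gam. \<exists>d'\<in>DD. d \<circ> f = g \<circ> d'"
      proof (cases "d = sc v")
        case True
        have "G (v * u) \<in> Gam" using G_Gam U_mult u v by blast
        moreover have "sc v \<in> DD" using DD_iff v by blast
        ultimately show ?thesis using id_a[OF nz] True u by blast
      next
        case False
        then have d: "d = sc v \<circ> B" using v by blast
        have "G (v / (u * w)) \<in> Gam" using G_Gam U_mult U_div U_w u v by blast
        moreover have "sc (v / w) \<circ> B \<in> DD" using DD_iff U_div[OF v(1) U_w] by blast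
        ultimately show ?thesis using id_c[OF nz] d u by blast
      qed
    qed
  next
    case (mgen_inv f)
    then obtain u where u: "u \<in> U" "f = G u" by blast
    have f: "inv_into UNIV f = Gi u" using inv_G u U_ne0 by simp
    show ?case
    proof
      fix d assume "d \<in> DD"
      then obtain v where v: "v \<in> U" "d = sc v \<or> d = sc v \<circ> B" using DD_iff by blast
      have nz: "u \<noteq> 0" "v \<noteq> 0" using u v U_ne0 by auto
      show "\<exists>g\<in>Gam. \<exists>d'\<in>DD. d \<circ> inv_into UNIV f = g \<circ> d'"
      proof (cases "d = sc v")
        case True
        have "Gi (v * u) \<in> Gam" using Gi_Gam U_mult u v by blast
        moreover have "sc v \<in> DD" using DD_iff v by blast
        ultimately show ?thesis using id_b[OF nz] True f by metis
      next
        case False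
        then have d: "d = sc v \<circ> B" using v by blast
        have "Gi (v / u) \<in> Gam" using Gi_Gam U_div u v by blast
        moreover have "sc (v * w) \<circ> B \<in> DD" using DD_iff U_mult[OF v(1) U_w] by blast
        ultimately show ?thesis using id_d[OF nz] d f by metis
      qed
    qed
  next
    case (mgen_comp f g)
    show ?case
    proof
      fix d assume d: "d \<in> DD"
      obtain g1 d1 where 1: "g1 \<in> Gam" "d1 \<in> DD" "d \<circ> f = g1 \<circ> d1" using mgen_comp.IH(1) d by blast
      obtain g2 d2 where 2: "g2 \<in> Gam" "d2 \<in> DD" "d1 \<circ> g = g2 \<circ> d2" using mgen_comp.IH(2) 1(2) by blast
      have "d \<circ> (f \<circ> g) = (g1 \<circ> g2) \<circ> d2" using 1 2 by (metis comp_assoc)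
      moreover have "g1 \<circ> g2 \<in> Gam" using 1 2 Gam_comp by blast
      ultimately show "\<exists>g'\<in>Gam. \<exists>d'\<in>DD. d \<circ> (f \<circ> g) = g' \<circ> d'" using 2 by blast
    qed
  qed
qed

lemma factor_aux: assumes "k \<in> K"
  shows "\<forall>g\<in>Gam. \<forall>d\<in>DD. \<exists>g'\<in>Gam. \<exists>d'\<in>DD. k \<circ> g \<circ> d = g' \<circ> d'"
proof -
  have DDcase: "\<exists>g'\<in>Gam. \<exists>d'\<in>DD. e \<circ> g \<circ> d = g' \<circ> d'" if ths: "e \<in> DD" "g \<in> Gam" "d \<in> DD" for e g d
  proof -
    obtain g' d' where gd: "g' \<in> Gam" "d' \<in> DD" "e \<circ> g = g' \<circ> d'" using DGam ths by blast
    then have "e \<circ> g \<circ> d = g' \<circ> (d' \<circ> d)" by (simp add: comp_assoc)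
    moreover have "d' \<circ> d \<in> DD" using DD_closed gd ths by blast
    ultimately show ?thesis using gd by blast
  qed
  have Gcase: "\<exists>g'\<in>Gam. \<exists>d'\<in>DD. e \<circ> g \<circ> d = g' \<circ> d'" if "e \<in> Gam" "g \<in> Gam" "d \<in> DD" for e g d
    using that Gam_comp by blast
  from assms show ?thesis unfolding K_def
  proof (induction rule: mgen.induct)
    case mgen_id then show ?case by auto
  next
    case (mgen_gen f)
    then have "f \<in> DD \<or> f \<in> Gam" using A_DD B_DD T_Gam by auto
    then show ?case using DDcase Gcase by blast
  next
    case (mgen_inv f)
    have "inv_into UNIV f \<in> DD \<or> inv_into UNIV f \<in> Gam"
    proof -
      have "f = A \<or> f = B \<or> f = T" using mgen_inv by auto
      moreover have "inv_into UNIV A \<in> DD" using mgenAB_DD mgen.mgen_inv[of A "{A, B}"] by auto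
      moreover have "inv_into UNIV B \<in> DD" using B_DD inv_B by simp
      moreover have "inv_into UNIV T \<in> Gam" using invT_Gam invT_def by simp
      ultimately show ?thesis by blast
    qed
    then show ?case using DDcase Gcase by blast
  next
    case (mgen_comp f g)
    show ?case
    proof (intro ballI)
      fix h d assume hd: "h \<in> Gam" "d \<in> DD"
      obtain g1 d1 where 1: "g1 \<in> Gam" "d1 \<in> DD" "g \<circ> h \<circ> d = g1 \<circ> d1" using mgen_comp.IH(2) hd by blast
      obtain g2 d2 where 2: "g2 \<in> Gam" "d2 \<in> DD" "f \<circ> g1 \<circ> d1 = g2 \<circ> d2" using mgen_comp.IH(1) 1 by blast
      have "f \<circ> g \<circ> h \<circ> d = g2 \<circ> d2" using 1 2 by (metis comp_assoc)
      then show "\<exists>g'\<in>Gam. \<exists>d'\<in>DD. f \<circ> g \<circ> h \<circ> d = g' \<circ> d'" using 2 by blast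
    qed
  qed
qed

lemma factor: "k \<in> K \<Longrightarrow> \<exists>g\<in>Gam. \<exists>d\<in>DD. k = g \<circ> d"
  using factor_aux[of k] Gam_id id_DD by fastforce

lemma rcos_DD: assumes "g \<in> Gam" "d \<in> DD" shows "Gam #>\<^bsub>M\<^esub> (g \<circ> d) = Gam #>\<^bsub>M\<^esub> d"
proof -
  have gK: "g \<in> K" "d \<in> K" using assms Gam_K DD_K by auto
  have "Gam #>\<^bsub>M\<^esub> (g \<otimes>\<^bsub>M\<^esub> d) = (Gam #>\<^bsub>M\<^esub> g) #>\<^bsub>M\<^esub> d"
    using group.coset_mult_assoc[OF grp, of Gam g d] gK Gam_K by simp
  also have "Gam #>\<^bsub>M\<^esub> g = Gam" using subgroup.rcos_const[OF Gam_sub grp assms(1)] .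
  finally show ?thesis by (simp add: o_def)
qed

lemma rcosets_eq: "rcosets\<^bsub>M\<^esub> Gam = (\<lambda>d. Gam #>\<^bsub>M\<^esub> d) ` DD"
proof
  show "rcosets\<^bsub>M\<^esub> Gam \<subseteq> (\<lambda>d. Gam #>\<^bsub>M\<^esub> d) ` DD"
  proof
    fix C assume "C \<in> rcosets\<^bsub>M\<^esub> Gam"
    then obtain k where k: "k \<in> K" "C = Gam #>\<^bsub>M\<^esub> k" unfolding RCOSETS_def by auto
    obtain g d where "g \<in> Gam" "d \<in> DD" "k = g \<circ> d" using factor[OF k(1)] by blast
    then show "C \<in> (\<lambda>d. Gam #>\<^bsub>M\<^esub> d) ` DD" using k rcos_DD by auto
  qed
  show "(\<lambda>d. Gam #>\<^bsub>M\<^esub> d) ` DD \<subseteq> rcosets\<^bsub>M\<^esub> Gam"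
    using DD_K unfolding RCOSETS_def by auto
qed

lemma rcos_inj: "inj_on (\<lambda>d. Gam #>\<^bsub>M\<^esub> d) DD"
proof (rule inj_onI)
  fix d1 d2 assume d: "d1 \<in> DD" "d2 \<in> DD" "Gam #>\<^bsub>M\<^esub> d1 = Gam #>\<^bsub>M\<^esub> d2"
  have "d1 \<in> Gam #>\<^bsub>M\<^esub> d1" using group.rcos_self[OF grp, of d1 Gam] Gam_sub DD_K d by auto
  then have "d1 \<in> Gam #>\<^bsub>M\<^esub> d2" using d by simp
  then obtain h where h: "h \<in> Gam" "d1 = h \<circ> d2" unfolding r_coset_def by auto
  have q: "Some 0 \<in> X" by (simp add: X_def)
  have "d2 (Some 0) \<in> X" "d1 (Some 0) \<in> X" using DD_X d q by auto
  then have "h = id" using PP[OF h(1), of "d2 (Some 0)"] h by simp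
  then show "d1 = d2" using h by simp
qed

lemma card_DD: "card DD = 2 * n"
proof -
  have e: "DD = sc ` U \<union> (\<lambda>u. sc u \<circ> B) ` U" unfolding DD_def by blast
  have i1: "inj_on sc U"
  proof (rule inj_onI)
    fix u v assume "sc u = sc v"
    then have "sc u (Some 1) = sc v (Some 1)" by simp
    then show "u = v" by simp
  qed
  have i2: "inj_on (\<lambda>u. sc u \<circ> B) U"
  proof (rule inj_onI)
    fix u v assume "sc u \<circ> B = sc v \<circ> B"
    then have "(sc u \<circ> B) (Some 1) = (sc v \<circ> B) (Some 1)" by simp
    then show "u = v" by (simp add: B_def B_Some)
  qed
  have dj: "sc ` U \<inter> (\<lambda>u. sc u \<circ> B) ` U = {}"
  proof (rule ccontr)
    assume "sc ` U \<inter> (\<lambda>u. sc u \<circ> B) ` U \<noteq> {}"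
    then obtain u v where "sc u = sc v \<circ> B" by auto
    then have "sc u None = (sc v \<circ> B) None" by simp
    then show False by (simp add: B_None')
  qed
  have "card DD = card (sc ` U) + card ((\<lambda>u. sc u \<circ> B) ` U)"
    unfolding e by (rule card_Un_disjoint) (use finite_U dj in auto)
  also have "\<dots> = n + n" using card_image[OF i1] card_image[OF i2] card_U by simp
  finally show ?thesis by simp
qed

lemma card_rcosets: "card (rcosets\<^bsub>M\<^esub> Gam) = 2 * n"
  unfolding rcosets_eq card_image[OF rcos_inj] card_DD ..

lemma not_normal: "\<not> Gam \<lhd> M"
proof
  assume N: "Gam \<lhd> M"
  have BK: "B \<in> K" using B_DD DD_K by blast
  have "B \<otimes>\<^bsub>M\<^esub> T \<otimes>\<^bsub>M\<^esub> inv\<^bsub>M\<^esub> B \<in> Gam"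
    using normal.inv_op_closed2[OF N _ T_Gam] BK by simp
  then have h: "B \<circ> T \<circ> B \<in> Gam" using minv[OF BK] inv_B by simp
  have e: "B \<circ> T \<circ> B = G (1/w) \<circ> sc (1/w)"
    using w_ne0 by (intro ext) (simp add: G_app B_T B_B sc_sc sc_1)
  have "Gi (1/w) \<circ> (B \<circ> T \<circ> B) = sc (1/w)"
    unfolding e using Gi_G[of "1/w"] w_ne0 by (simp add: comp_assoc[symmetric])
  moreover have "Gi (1/w) \<in> Gam" using Gi_Gam U_div[OF U_1 U_w] by simp
  ultimately have "sc (1/w) \<in> Gam" using h Gam_comp by metis
  moreover have "Some 0 \<in> X" by (simp add: X_def)
  ultimately have "sc (1/w) = id" using PP by (metis sc_X)
  then have "sc (1/w) (Some 1) = Some 1" by simp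
  then show False using w_ne1 by simp
qed

end



context ctx begin

lemma Gam_kl: "kleinian Gam"
proof -
  obtain e where e: "e > 0" "\<forall>g\<in>K. g \<noteq> id \<longrightarrow>
        (\<forall>a b c d. a * d - b * c = 1 \<and> g = moeb a b c d \<longrightarrow>
           e \<le> cmod (a - 1) + cmod b + cmod c + cmod (d - 1))"
    using K_kl unfolding kleinian_def by blast
  show ?thesis unfolding kleinian_def
  proof (intro conjI)
    show "\<forall>g\<in>Gam. is_moebius g" using K_kl Gam_K unfolding kleinian_def by blast
    show "id \<in> Gam" by (rule Gam_id)
    show "\<forall>f\<in>Gam. \<forall>g\<in>Gam. f \<circ> g \<in> Gam \<and> inv_into UNIV f \<in> Gam" using Gam_comp Gam_inv by blast
    show "\<exists>\<epsilon>>0. \<forall>g\<in>Gam. g \<noteq> id \<longrightarrow>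
        (\<forall>a b c d. a * d - b * c = 1 \<and> g = moeb a b c d \<longrightarrow>
           \<epsilon> \<le> cmod (a - 1) + cmod b + cmod c + cmod (d - 1))"
      using e Gam_K by blast
  qed
qed

lemma lox_G: assumes u: "u \<noteq> 0" shows "loxodromic (G u)"
proof -
  obtain a b c d where det: "a * d - b * c = 1" and Td: "T = moeb a b c d"
    and tr: "(a + d)\<^sup>2 \<notin> complex_of_real ` {0..4}"
    using T_lox unfolding loxodromic_def by blast
  have e: "G u = moeb a (u * b) (c / u) d"
  proof
    fix x show "G u x = moeb a (u * b) (c / u) d x"
    proof (cases x)
      case None then show ?thesis using u unfolding G_app unfolding Td by (simp add: moeb_def)
    next
      case (Some z)
      have c1: "(c / u * z + d = 0) \<longleftrightarrow> (c * (z / u) + d = 0)" by (simp add: field_simps)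
      have c2: "c * (z / u) + d \<noteq> 0 \<Longrightarrow> u * ((a * (z / u) + b) / (c * (z / u) + d)) = (a * z + u * b) / (c / u * z + d)"
      proof -
        assume nz: "c * (z / u) + d \<noteq> 0"
        have "c / u * z + d = c * (z / u) + d" by simp
        moreover have "u * (a * (z / u) + b) = a * z + u * b" using u by (simp add: field_simps)
        ultimately show ?thesis by (metis times_divide_eq_right)
      qed
      show ?thesis using Some u c1 c2 unfolding G_app unfolding Td by (simp add: moeb_def)
    qed
  qed
  have "a * d - (u * b) * (c / u) = 1" using det u by simp
  then show ?thesis unfolding loxodromic_def e using tr by blast
qed

lemma schottky_Gam: "schottky Gam n"
proof -
  define gen where "gen = (\<lambda>j. (A ^^ j) \<circ> T \<circ> inv_into UNIV (A ^^ j))"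
  define E where "E = (\<lambda>i. sc (w ^ i) ` D1)"
  define E' where "E' = (\<lambda>i. sc (w ^ i) ` D2)"
  define al where "al = (\<lambda>i. riemann_sphere frontier_of (E i))"
  define al' where "al' = (\<lambda>i. riemann_sphere frontier_of (E' i))"
  define D where "D = UNIV - (\<Union>i<n. E i \<union> E' i)"
  have genG: "gen j = G (w ^ j)" for j
    unfolding gen_def inv_A_pow unfolding A_pow G_def ..
  have wU: "w ^ j \<in> U" for j by (rule U_wpow)
  have w0: "w ^ j \<noteq> 0" for j using w_ne0 by simp
  have X1: "None \<notin> E i" "None \<notin> E' i" for i
    using X_sc_D[OF _ w0] unfolding E_def E'_def X_def by auto
  have Gam_gen: "Gam = mgen (gen ` {..<n})"
    unfolding Gam_def gen_def by (rule arg_cong[where f=mgen]) blast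
  have lox: "\<forall>i<n. loxodromic (gen i)" using genG lox_G w0 by simp
  have cd: "closed_disc (E i)" "closed_disc (E' i)" for i
    unfolding E_def E'_def using closed_disc_sc[OF w0] D1_disc D2_disc by auto
  have loops: "\<forall>i<n. simple_loop (al i) \<and> simple_loop (al' i)"
    unfolding al_def al'_def using simple_loop_frontier cd X1 by blast
  have discs: "\<forall>i<n. closed_disc (E i) \<and> closed_disc (E' i) \<and>
       riemann_sphere frontier_of (E i) = al i \<and> riemann_sphere frontier_of (E' i) = al' i"
    using cd unfolding al_def al'_def by blast
  have d1: "\<forall>i<n. \<forall>j<n. E i \<inter> E' j = {}" unfolding E_def E'_def using dj12 wU by blast
  have d2: "\<forall>i<n. \<forall>j<n. i \<noteq> j \<longrightarrow> E i \<inter> E j = {} \<and> E' i \<inter> E' j = {}"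
  proof (intro allI impI)
    fix i j assume ij: "i < n" "j < n" "i \<noteq> j"
    then have "w ^ i \<noteq> w ^ j" using w_pow_inj by blast
    then show "E i \<inter> E j = {} \<and> E' i \<inter> E' j = {}" unfolding E_def E'_def using dj11 dj22 wU by blast
  qed
  have act: "\<forall>i<n. gen i ` (al i) = al' i \<and> gen i ` D \<inter> D = {}"
  proof (intro allI impI conjI)
    fix i assume i: "i < n"
    let ?u = "w ^ i"
    have F1: "al i = sc ?u ` (riemann_sphere frontier_of D1)"
      unfolding al_def E_def by (rule frontier_sc[OF w0])
    have F2: "al' i = sc ?u ` (riemann_sphere frontier_of D2)"
      unfolding al'_def E'_def by (rule frontier_sc[OF w0])
    have "gen i ` al i = sc ?u ` T ` (sc (1 / ?u) ` sc ?u ` (riemann_sphere frontier_of D1))"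
      unfolding genG F1 G_def by (simp add: image_comp)
    also have "sc (1 / ?u) ` sc ?u ` S = S" for S
      by (simp add: image_comp sc_inv'[OF w0])
    finally show "gen i ` al i = al' i" unfolding F2 T_bdry by simp
    show "gen i ` D \<inter> D = {}"
    proof (rule ccontr)
      assume "gen i ` D \<inter> D \<noteq> {}"
      then obtain x where x: "x \<in> D" "gen i x \<in> D" by blast
      have "x \<notin> src (?u, True)" using x i unfolding D_def E_def src_def by auto
      then have "ev (?u, True) x \<in> tgt (?u, True)" using letter wU by simp
      then have "gen i x \<in> E' i" unfolding genG ev_def tgt_def E'_def by simp
      then show False using x i unfolding D_def by auto
    qed
  qed
  show ?thesis unfolding schottky_def
    apply (rule conjI[OF Gam_kl])
    apply (rule exI[of _ gen], rule exI[of _ al], rule exI[of _ al'], rule exI[of _ E], rule exI[of _ E'], rule exI[of _ D])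
    using Gam_gen lox loops discs d1 d2 D_def act by blast
qed

end

theorem mainTheorem9:
  fixes n :: nat and A B T :: "cpt \<Rightarrow> cpt" and D1 D2 :: "cpt set"
  assumes n2: "n \<ge> 2" and n_even: "even n"
    and A_def: "A = moeb (exp (2 * pi * \<i> / of_nat n)) 0 0 1"
    and B_def: "B = moeb 0 1 1 0"
    and T_lox: "loxodromic T"
    and T_conj: "T \<circ> B \<circ> inv_into UNIV T = A \<circ> B"
    and D1_disc: "closed_disc D1" and D2_disc: "closed_disc D2"
    and sep: "\<forall>h\<in>mgen {A, B}. h ` D1 \<inter> D2 = {}"
    and pi1: "precisely_invariant D1 (mgen {B}) (mgen {A, B})"
    and pi2: "precisely_invariant D2 (mgen {A \<circ> B}) (mgen {A, B})"
    and T_bdry: "T ` (riemann_sphere frontier_of D1) = riemann_sphere frontier_of D2"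
    and T_ext: "T ` (UNIV - D1) = riemann_sphere interior_of D2"
    and K_kleinian: "kleinian (mgen {A, B, T})"
  shows "schottky (mgen {(A ^^ j) \<circ> T \<circ> inv_into UNIV (A ^^ j) | j. j < n}) n
       \<and> subgroup (mgen {(A ^^ j) \<circ> T \<circ> inv_into UNIV (A ^^ j) | j. j < n}) (moeb_group (mgen {A, B, T}))
       \<and> card (rcosets\<^bsub>moeb_group (mgen {A, B, T})\<^esub> (mgen {(A ^^ j) \<circ> T \<circ> inv_into UNIV (A ^^ j) | j. j < n})) = 2 * n
       \<and> \<not> (mgen {(A ^^ j) \<circ> T \<circ> inv_into UNIV (A ^^ j) | j. j < n}) \<lhd> moeb_group (mgen {A, B, T})"
proof -
  interpret ctx n A B T D1 D2 using assms by (unfold_locales) auto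
  show ?thesis using schottky_Gam Gam_sub card_rcosets not_normal unfolding Gam_def K_def by blast
qed



end
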